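(* Let $G$ be an abelian group and $X$ a finitely supported $G$-valued random variable. Let $S\subset G$ be a set with $\mathbb{P}(X\in S)\ge\frac12$. Then for any other finitely supported $G$-valued random variable $Y$, \[\log|S|\ge \mathbb{H}(Y)-4\,\mathrm{d}[X;Y]-2\log 2.\]
   Context: $\log$ is natural. $\mathbb{H}(X)=\sum_x p_X(x)\log(1/p_X(x))$ with $p_X(x)=\mathbb{P}(X=x)$. The entropic Ruzsa distance is $\mathrm{d}[X;Y]=\mathbb{H}(X'-Y')-\tfrac12\mathbb{H}(X)-\tfrac12\mathbb{H}(Y)$, where $X',Y'$ are independent with the same distributions as $X,Y$. *)

theory Defs
  imports "HOL-Probability.Probability"
begin

text \<open>A finitely supported G-valued random variable is represented by its
distribution, a pmf with finite support. Entropy uses the natural logarithm.\<close>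

definition entropy_pmf :: "'a pmf \<Rightarrow> real" where
  "entropy_pmf p = (\<Sum>x\<in>set_pmf p. pmf p x * ln (1 / pmf p x))"

definition diff_pmf :: "'a::ab_group_add pmf \<Rightarrow> 'a pmf \<Rightarrow> 'a pmf" where
  "diff_pmf p q = map_pmf (\<lambda>(x, y). x - y) (pair_pmf p q)"

definition ruzsa_dist :: "'a::ab_group_add pmf \<Rightarrow> 'a pmf \<Rightarrow> real" where
  "ruzsa_dist p q = entropy_pmf (diff_pmf p q) - entropy_pmf p / 2 - entropy_pmf q / 2"

end

theory Submission
  imports Defs
begin



definition phi :: "real \<Rightarrow> real" where "phi t = t * ln (1 / t)"

lemma phi_zero[simp]: "phi 0 = 0" by (simp add: phi_def)

lemma gibbs_term:
  assumes "t \<ge> 0" "c > 0"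
  shows "phi t \<le> t * ln c + 1 / c - t"
proof (cases "t = 0")
  case True then show ?thesis using assms by simp
next
  case False
  then have t: "t > 0" using assms by simp
  have "ln (1 / (c * t)) \<le> 1 / (c * t) - 1" using t assms by (intro ln_le_minus_one) simp
  then have "t * ln (1 / (c * t)) \<le> t * (1 / (c * t) - 1)" using t by (simp add: mult_left_mono)
  moreover have "ln (1 / (c * t)) = ln (1 / t) - ln c" using t assms
    by (simp add: ln_div ln_mult)
  moreover have "t * (1 / (c * t) - 1) = 1 / c - t" using t assms by (simp add: field_simps)
  ultimately show ?thesis unfolding phi_def by (simp add: algebra_simps)
qed

lemma pw:
  fixes s m :: "'i \<Rightarrow> real"
  assumes I: "finite I" and s: "\<And>i. i \<in> I \<Longrightarrow> s i \<ge> 0" and m: "\<And>i. i \<in> I \<Longrightarrow> m i \<ge> 0"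
    and sm: "\<And>i. i \<in> I \<Longrightarrow> s i > 0 \<Longrightarrow> m i > 0"
  shows "phi (\<Sum>i\<in>I. s i) \<ge> (\<Sum>i\<in>I. phi (s i) + s i * ln (m i / (\<Sum>j\<in>I. m j)))"
proof (cases "(\<Sum>i\<in>I. s i) = 0")
  case True
  then have "\<forall>i\<in>I. s i = 0" using sum_nonneg_eq_0_iff[OF I] s by blast
  then show ?thesis using True by simp
next
  case False
  define S where "S = (\<Sum>i\<in>I. s i)"
  define M where "M = (\<Sum>j\<in>I. m j)"
  have S0: "S > 0" using False s unfolding S_def by (metis order_less_le sum_nonneg)
  obtain i0 where i0: "i0 \<in> I" "s i0 > 0" using False s
    by (metis order_less_le sum.neutral)
  have M0: "M > 0" unfolding M_def
    using sum_nonneg_eq_0_iff[OF I] m sm[OF i0] i0(1) by (metis order_less_le sum_nonneg)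
  have trm: "s i * ln (1 / S) - (phi (s i) + s i * ln (m i / M)) \<ge> s i - m i * S / M"
    if i: "i \<in> I" for i
  proof (cases "s i = 0")
    case True then show ?thesis using m[OF i] S0 M0 by simp
  next
    case False
    then have si: "s i > 0" using s[OF i] by simp
    have mi: "m i > 0" using sm[OF i si] .
    have x: "S * m i / (s i * M) > 0" using si mi S0 M0 by simp
    have "ln (S * m i / (s i * M)) \<le> S * m i / (s i * M) - 1" using ln_le_minus_one[OF x] .
    then have f1: "s i * ln (S * m i / (s i * M)) \<le> s i * (S * m i / (s i * M) - 1)"
      using si by (simp add: mult_left_mono)
    have f2: "s i * (S * m i / (s i * M) - 1) = m i * S / M - s i" using si M0 by (simp add: field_simps)
    have f3: "ln (S * m i / (s i * M)) = - (ln (1 / S) - ln (1 / s i) - ln (m i / M))"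
      using si mi S0 M0 by (simp add: ln_div ln_mult)
    have "s i * ln (1 / S) - (phi (s i) + s i * ln (m i / M)) = - (s i * ln (S * m i / (s i * M)))"
      unfolding phi_def f3 by (simp add: algebra_simps)
    with f1 f2 show ?thesis by linarith
  qed
  have "(\<Sum>i\<in>I. s i - m i * S / M) \<le> (\<Sum>i\<in>I. s i * ln (1 / S) - (phi (s i) + s i * ln (m i / M)))"
    by (rule sum_mono) (use trm in auto)
  moreover have "(\<Sum>i\<in>I. s i - m i * S / M) = 0"
    using M0 by (simp add: sum_subtractf sum_divide_distrib[symmetric] sum_distrib_right[symmetric] M_def S_def)
  moreover have "(\<Sum>i\<in>I. s i * ln (1 / S) - (phi (s i) + s i * ln (m i / M))) =
     phi S - (\<Sum>i\<in>I. phi (s i) + s i * ln (m i / M))"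
    by (simp add: sum_subtractf phi_def S_def sum_distrib_right)
  ultimately show ?thesis unfolding S_def M_def by linarith
qed


lemma mix:
  fixes g :: "'i \<Rightarrow> 'z \<Rightarrow> real"
  assumes I: "finite I" and B: "finite B" and g: "\<And>i z. g i z \<ge> 0"
  shows "(\<Sum>z\<in>B. phi (\<Sum>i\<in>I. g i z)) \<ge> (\<Sum>i\<in>I. \<Sum>z\<in>B. phi (g i z))
     + (\<Sum>i\<in>I. (\<Sum>z\<in>B. g i z) * ln ((\<Sum>z\<in>B. g i z) / (\<Sum>j\<in>I. \<Sum>z\<in>B. g j z)))"
proof -
  define m where "m i = (\<Sum>z\<in>B. g i z)" for i
  have pz: "phi (\<Sum>i\<in>I. g i z) \<ge> (\<Sum>i\<in>I. phi (g i z) + g i z * ln (m i / (\<Sum>j\<in>I. m j)))"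
    if z: "z \<in> B" for z
  proof (rule pw[OF I])
    show "0 \<le> g i z" for i using g .
    show "0 \<le> m i" for i unfolding m_def by (simp add: g sum_nonneg)
    show "0 < m i" if "0 < g i z" for i
    proof -
      have "g i z \<le> m i" unfolding m_def by (rule member_le_sum[OF z _ B]) (simp add: g)
      then show ?thesis using that by simp
    qed
  qed
  have "(\<Sum>z\<in>B. phi (\<Sum>i\<in>I. g i z)) \<ge> (\<Sum>z\<in>B. \<Sum>i\<in>I. phi (g i z) + g i z * ln (m i / (\<Sum>j\<in>I. m j)))"
    by (rule sum_mono) (rule pz)
  also have "(\<Sum>z\<in>B. \<Sum>i\<in>I. phi (g i z) + g i z * ln (m i / (\<Sum>j\<in>I. m j)))
     = (\<Sum>i\<in>I. \<Sum>z\<in>B. phi (g i z)) + (\<Sum>i\<in>I. m i * ln (m i / (\<Sum>j\<in>I. m j)))"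
    by (simp add: sum.distrib sum.swap[of _ B I] m_def sum_distrib_right)
  finally show ?thesis unfolding m_def .
qed


lemma phi_mult:
  assumes "c \<ge> 0" "t \<ge> 0"
  shows "phi (c * t) = c * phi t + t * phi c"
proof (cases "c = 0 \<or> t = 0")
  case True then show ?thesis by auto
next
  case False
  then have "c > 0" "t > 0" using assms by auto
  then show ?thesis unfolding phi_def by (simp add: ln_div ln_mult algebra_simps)
qed

lemma phi_alt: "t \<ge> 0 \<Longrightarrow> phi t = - (t * ln t)"
  by (cases "t = 0") (auto simp: phi_def ln_div)

lemma phi_nonneg_le1: "0 \<le> t \<Longrightarrow> t \<le> 1 \<Longrightarrow> phi t \<ge> 0"
  unfolding phi_def by (cases "t = 0") (auto intro!: mult_nonneg_nonneg)

lemma reidx: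
  fixes f :: "'b \<Rightarrow> 'c::comm_monoid_add"
  assumes A: "finite A" and B: "finite B" and h: "inj_on h B"
    and nz: "\<And>y. f y \<noteq> 0 \<Longrightarrow> y \<in> A \<and> y \<in> h ` B"
  shows "(\<Sum>z\<in>B. f (h z)) = (\<Sum>y\<in>A. f y)"
proof -
  have "(\<Sum>z\<in>B. f (h z)) = (\<Sum>y\<in>h ` B. f y)" by (simp add: sum.reindex[OF h])
  also have "\<dots> = (\<Sum>y\<in>h ` B \<inter> A. f y)"
    by (rule sum.mono_neutral_right) (use B nz in auto)
  also have "\<dots> = (\<Sum>y\<in>A. f y)"
    by (rule sum.mono_neutral_left) (use A nz in auto)
  finally show ?thesis .
qed

lemma diff_pmf_bind: "diff_pmf X Y = bind_pmf X (\<lambda>x. map_pmf (\<lambda>y. x - y) Y)"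
  unfolding diff_pmf_def pair_pmf_def
  by (simp add: map_bind_pmf map_return_pmf map_pmf_def[symmetric] pmf.map_comp o_def)

lemma pmf_diff:
  assumes "finite (set_pmf X)"
  shows "pmf (diff_pmf X Y) z = (\<Sum>x\<in>set_pmf X. pmf X x * pmf Y (x - z))"
proof -
  have m: "pmf (map_pmf (\<lambda>y. x - y) Y) z = pmf Y (x - z)" for x
  proof -
    have "inj (\<lambda>y::'a. x - y)" by (rule injI) simp
    from pmf_map_inj'[OF this, of Y "x - z"] show ?thesis by simp
  qed
  show ?thesis unfolding diff_pmf_bind pmf_bind m
    by (subst integral_measure_pmf_real[OF assms]) (auto simp: mult.commute)
qed

lemma set_diff_pmf: "set_pmf (diff_pmf X Y) = (\<lambda>(x, y). x - y) ` (set_pmf X \<times> set_pmf Y)"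
  unfolding diff_pmf_def by simp

lemma entropy_alt: "finite (set_pmf p) \<Longrightarrow> entropy_pmf p = (\<Sum>x\<in>set_pmf p. phi (pmf p x))"
  unfolding entropy_pmf_def phi_def by simp


definition XW :: "'a pmf \<Rightarrow> 'a set \<Rightarrow> 'a \<Rightarrow> real" where
  "XW X W x = (if x \<in> W then pmf X x else 0)"

definition DW :: "'a::ab_group_add pmf \<Rightarrow> 'a pmf \<Rightarrow> 'a set \<Rightarrow> 'a \<Rightarrow> real" where
  "DW X Y W z = (\<Sum>x\<in>set_pmf X. XW X W x * pmf Y (x - z))"

definition pW :: "'a pmf \<Rightarrow> 'a set \<Rightarrow> real" where
  "pW X W = (\<Sum>x\<in>set_pmf X. XW X W x)"

definition AW :: "'a pmf \<Rightarrow> 'a set \<Rightarrow> real" where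
  "AW X W = (\<Sum>x\<in>set_pmf X. phi (XW X W x))"

definition PhiD :: "'a::ab_group_add pmf \<Rightarrow> 'a pmf \<Rightarrow> 'a set \<Rightarrow> real" where
  "PhiD X Y W = (\<Sum>z\<in>set_pmf (diff_pmf X Y). phi (DW X Y W z))"

lemma XW_nonneg: "XW X W x \<ge> 0" by (simp add: XW_def)
lemma XW_le: "XW X W x \<le> pmf X x" by (simp add: XW_def)

lemma XW_nz: "XW X W x \<noteq> 0 \<Longrightarrow> x \<in> set_pmf X"
  by (auto simp: XW_def set_pmf_iff split: if_splits)

lemma pW_nonneg: "pW X W \<ge> 0" unfolding pW_def by (simp add: sum_nonneg XW_nonneg)

context
  fixes X Y :: "'a::ab_group_add pmf"
  assumes fx: "finite (set_pmf X)" and fy: "finite (set_pmf Y)"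
begin

private lemma fz: "finite (set_pmf (diff_pmf X Y))"
  unfolding set_diff_pmf using fx fy by simp

private lemma sum_shiftY:
  assumes x: "x \<in> set_pmf X" and f0: "f 0 = 0"
  shows "(\<Sum>z\<in>set_pmf (diff_pmf X Y). f (pmf Y (x - z))) = (\<Sum>y\<in>set_pmf Y. f (pmf Y y))"
proof (rule reidx[OF fy fz, where h = "\<lambda>z. x - z" and f = "\<lambda>y. f (pmf Y y)"])
  show "inj_on ((-) x) (set_pmf (diff_pmf X Y))" by (rule inj_onI) simp
  fix y assume "f (pmf Y y) \<noteq> 0"
  then have "pmf Y y \<noteq> 0" using f0 by auto
  then have y: "y \<in> set_pmf Y" by (simp add: set_pmf_iff)
  have "(x, y) \<in> set_pmf X \<times> set_pmf Y" using x y by simp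
  then have "x - y \<in> set_pmf (diff_pmf X Y)" unfolding set_diff_pmf by (rule rev_image_eqI) simp
  moreover have "y = x - (x - y)" by simp
  ultimately have "y \<in> (-) x ` set_pmf (diff_pmf X Y)" by (rule rev_image_eqI)
  with y show "y \<in> set_pmf Y \<and> y \<in> (-) x ` set_pmf (diff_pmf X Y)" by simp
qed

private lemma sum_shiftX:
  assumes y: "y \<in> set_pmf Y" and f0: "f 0 = 0"
  shows "(\<Sum>z\<in>set_pmf (diff_pmf X Y). f (XW X W (z + y))) = (\<Sum>x\<in>set_pmf X. f (XW X W x))"
proof (rule reidx[OF fx fz, where h = "\<lambda>z. z + y" and f = "\<lambda>x. f (XW X W x)"])
  show "inj_on (\<lambda>z. z + y) (set_pmf (diff_pmf X Y))" by (rule inj_onI) simp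
  fix x assume "f (XW X W x) \<noteq> 0"
  then have "XW X W x \<noteq> 0" using f0 by auto
  then have x: "x \<in> set_pmf X" by (rule XW_nz)
  have "(x, y) \<in> set_pmf X \<times> set_pmf Y" using x y by simp
  then have "x - y \<in> set_pmf (diff_pmf X Y)" unfolding set_diff_pmf by (rule rev_image_eqI) simp
  moreover have "x = (x - y) + y" by simp
  ultimately have "x \<in> (\<lambda>z. z + y) ` set_pmf (diff_pmf X Y)" by (rule rev_image_eqI)
  with x show "x \<in> set_pmf X \<and> x \<in> (\<lambda>z. z + y) ` set_pmf (diff_pmf X Y)" by simp
qed

lemma sum_DW: "(\<Sum>z\<in>set_pmf (diff_pmf X Y). DW X Y W z) = pW X W"
proof -
  have "(\<Sum>z\<in>set_pmf (diff_pmf X Y). DW X Y W z)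
      = (\<Sum>x\<in>set_pmf X. XW X W x * (\<Sum>z\<in>set_pmf (diff_pmf X Y). pmf Y (x - z)))"
    unfolding DW_def sum_distrib_left by (rule sum.swap)
  also have "\<dots> = (\<Sum>x\<in>set_pmf X. XW X W x)"
  proof (rule sum.cong[OF refl])
    fix x assume x: "x \<in> set_pmf X"
    have "(\<Sum>z\<in>set_pmf (diff_pmf X Y). pmf Y (x - z)) = (\<Sum>y\<in>set_pmf Y. pmf Y y)"
      using sum_shiftY[OF x, where f = "\<lambda>t. t"] by simp
    also have "\<dots> = 1" by (rule sum_pmf_eq_1[OF fy order.refl])
    finally show "XW X W x * (\<Sum>z\<in>set_pmf (diff_pmf X Y). pmf Y (x - z)) = XW X W x" by simp
  qed
  finally show ?thesis unfolding pW_def .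
qed


lemma phi_log: "0 \<le> t \<Longrightarrow> t \<le> p \<Longrightarrow> phi t + t * ln (t / p) = t * ln (1 / p)"
  by (cases "t = 0") (auto simp: phi_def ln_div algebra_simps)

lemma phi_log2: "0 \<le> t \<Longrightarrow> 0 \<le> p \<Longrightarrow> (t * p) * ln (t * p / p) = - (p * phi t)"
  by (cases "p = 0") (auto simp: phi_alt)

lemma PhiD_ge1: "PhiD X Y W \<ge> pW X W * entropy_pmf Y + phi (pW X W)"
proof -
  define g where "g x z = XW X W x * pmf Y (x - z)" for x z
  define B where "B = set_pmf (diff_pmf X Y)"
  have fB: "finite B" unfolding B_def by (rule fz)
  have m: "(\<Sum>z\<in>B. g x z) = XW X W x" if x: "x \<in> set_pmf X" for x
  proof -
    have "(\<Sum>z\<in>B. pmf Y (x - z)) = (\<Sum>y\<in>set_pmf Y. pmf Y y)"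
      unfolding B_def using sum_shiftY[OF x, where f = "\<lambda>t. t"] by simp
    also have "\<dots> = 1" by (rule sum_pmf_eq_1[OF fy order.refl])
    finally show ?thesis unfolding g_def by (simp flip: sum_distrib_left)
  qed
  have M: "(\<Sum>j\<in>set_pmf X. \<Sum>z\<in>B. g j z) = pW X W"
    unfolding pW_def by (rule sum.cong[OF refl]) (rule m)
  have ph: "(\<Sum>z\<in>B. phi (g x z)) = XW X W x * entropy_pmf Y + phi (XW X W x)"
    if x: "x \<in> set_pmf X" for x
  proof -
    have "(\<Sum>z\<in>B. phi (g x z)) = (\<Sum>z\<in>B. XW X W x * phi (pmf Y (x - z)) + pmf Y (x - z) * phi (XW X W x))"
      unfolding g_def by (rule sum.cong[OF refl]) (rule phi_mult[OF XW_nonneg pmf_nonneg])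
    also have "\<dots> = XW X W x * (\<Sum>z\<in>B. phi (pmf Y (x - z))) + (\<Sum>z\<in>B. pmf Y (x - z)) * phi (XW X W x)"
      by (simp add: sum.distrib sum_distrib_left sum_distrib_right)
    also have "(\<Sum>z\<in>B. phi (pmf Y (x - z))) = entropy_pmf Y"
      unfolding B_def entropy_alt[OF fy] using sum_shiftY[OF x, where f = phi] by simp
    also have "(\<Sum>z\<in>B. pmf Y (x - z)) = 1"
      using m[OF x] XW_def
      unfolding B_def using sum_shiftY[OF x, where f = "\<lambda>t. t"] sum_pmf_eq_1[OF fy order.refl] by simp
    finally show ?thesis by simp
  qed
  have le: "XW X W x \<le> pW X W" if "x \<in> set_pmf X" for x
    unfolding pW_def by (rule member_le_sum[OF that _ fx]) (simp add: XW_nonneg)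
  have "PhiD X Y W = (\<Sum>z\<in>B. phi (\<Sum>x\<in>set_pmf X. g x z))"
    unfolding PhiD_def B_def DW_def g_def ..
  also have "\<dots> \<ge> (\<Sum>x\<in>set_pmf X. \<Sum>z\<in>B. phi (g x z))
     + (\<Sum>x\<in>set_pmf X. (\<Sum>z\<in>B. g x z) * ln ((\<Sum>z\<in>B. g x z) / (\<Sum>j\<in>set_pmf X. \<Sum>z\<in>B. g j z)))"
    by (rule mix[OF fx fB]) (simp add: g_def XW_nonneg)
  also have "(\<Sum>x\<in>set_pmf X. \<Sum>z\<in>B. phi (g x z))
     + (\<Sum>x\<in>set_pmf X. (\<Sum>z\<in>B. g x z) * ln ((\<Sum>z\<in>B. g x z) / (\<Sum>j\<in>set_pmf X. \<Sum>z\<in>B. g j z)))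
     = (\<Sum>x\<in>set_pmf X. XW X W x * entropy_pmf Y + (phi (XW X W x) + XW X W x * ln (XW X W x / pW X W)))"
    unfolding M by (simp add: ph m sum.distrib[symmetric] algebra_simps cong: sum.cong)
  also have "\<dots> = (\<Sum>x\<in>set_pmf X. XW X W x * entropy_pmf Y + XW X W x * ln (1 / pW X W))"
    by (rule sum.cong[OF refl]) (simp add: phi_log XW_nonneg le)
  also have "\<dots> = pW X W * entropy_pmf Y + phi (pW X W)"
    unfolding pW_def phi_def by (simp add: sum.distrib sum_distrib_right)
  finally show ?thesis .
qed


lemma PhiD_ge2: "PhiD X Y W \<ge> AW X W"
proof -
  define g where "g y z = pmf Y y * XW X W (z + y)" for y z
  define B where "B = set_pmf (diff_pmf X Y)"
  have fB: "finite B" unfolding B_def by (rule fz)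
  have DWe: "DW X Y W z = (\<Sum>y\<in>set_pmf Y. g y z)" for z
  proof -
    have "DW X Y W z = (\<Sum>x\<in>set_pmf X. (\<lambda>y. pmf Y y * XW X W (z + y)) (x - z))"
      unfolding DW_def by (simp add: mult.commute)
    also have "\<dots> = (\<Sum>y\<in>set_pmf Y. pmf Y y * XW X W (z + y))"
    proof (rule reidx[OF fy fx])
      show "inj_on (\<lambda>x. x - z) (set_pmf X)" by (rule inj_onI) simp
      fix y assume "pmf Y y * XW X W (z + y) \<noteq> 0"
      then have "pmf Y y \<noteq> 0" "XW X W (z + y) \<noteq> 0" by auto
      then have y: "y \<in> set_pmf Y" and zy: "z + y \<in> set_pmf X" by (auto simp: set_pmf_iff dest: XW_nz)
      have "y = (z + y) - z" by simp
      then have "y \<in> (\<lambda>x. x - z) ` set_pmf X" using zy by (rule image_eqI)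
      with y show "y \<in> set_pmf Y \<and> y \<in> (\<lambda>x. x - z) ` set_pmf X" by simp
    qed
    finally show ?thesis unfolding g_def .
  qed
  have sX: "(\<Sum>z\<in>B. XW X W (z + y)) = pW X W" if y: "y \<in> set_pmf Y" for y
    unfolding B_def pW_def using sum_shiftX[OF y, where f = "\<lambda>t. t"] by simp
  have sA: "(\<Sum>z\<in>B. phi (XW X W (z + y))) = AW X W" if y: "y \<in> set_pmf Y" for y
    unfolding B_def AW_def using sum_shiftX[OF y, where f = phi] by simp
  have m: "(\<Sum>z\<in>B. g y z) = pmf Y y * pW X W" if y: "y \<in> set_pmf Y" for y
    unfolding g_def by (simp add: sX[OF y] flip: sum_distrib_left)
  have M: "(\<Sum>j\<in>set_pmf Y. \<Sum>z\<in>B. g j z) = pW X W"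
  proof -
    have "(\<Sum>j\<in>set_pmf Y. \<Sum>z\<in>B. g j z) = (\<Sum>j\<in>set_pmf Y. pmf Y j) * pW X W"
      by (simp add: m sum_distrib_right)
    then show ?thesis by (simp add: sum_pmf_eq_1[OF fy order.refl])
  qed
  have ph: "(\<Sum>z\<in>B. phi (g y z)) = pmf Y y * AW X W + pW X W * phi (pmf Y y)"
    if y: "y \<in> set_pmf Y" for y
  proof -
    have "(\<Sum>z\<in>B. phi (g y z)) = (\<Sum>z\<in>B. pmf Y y * phi (XW X W (z + y)) + XW X W (z + y) * phi (pmf Y y))"
      unfolding g_def by (rule sum.cong[OF refl]) (rule phi_mult[OF pmf_nonneg XW_nonneg])
    also have "\<dots> = pmf Y y * (\<Sum>z\<in>B. phi (XW X W (z + y))) + (\<Sum>z\<in>B. XW X W (z + y)) * phi (pmf Y y)"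
      by (simp add: sum.distrib sum_distrib_left sum_distrib_right)
    finally show ?thesis using sA[OF y] sX[OF y] by simp
  qed
  have "PhiD X Y W = (\<Sum>z\<in>B. phi (\<Sum>y\<in>set_pmf Y. g y z))"
    unfolding PhiD_def B_def DWe ..
  also have "\<dots> \<ge> (\<Sum>y\<in>set_pmf Y. \<Sum>z\<in>B. phi (g y z))
     + (\<Sum>y\<in>set_pmf Y. (\<Sum>z\<in>B. g y z) * ln ((\<Sum>z\<in>B. g y z) / (\<Sum>j\<in>set_pmf Y. \<Sum>z\<in>B. g j z)))"
    by (rule mix[OF fy fB]) (simp add: g_def XW_nonneg)
  also have "(\<Sum>y\<in>set_pmf Y. \<Sum>z\<in>B. phi (g y z))
     + (\<Sum>y\<in>set_pmf Y. (\<Sum>z\<in>B. g y z) * ln ((\<Sum>z\<in>B. g y z) / (\<Sum>j\<in>set_pmf Y. \<Sum>z\<in>B. g j z)))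
     = (\<Sum>y\<in>set_pmf Y. pmf Y y * AW X W + pW X W * phi (pmf Y y) + (pmf Y y * pW X W) * ln (pmf Y y * pW X W / pW X W))"
    unfolding M by (simp add: ph m sum.distrib[symmetric] cong: sum.cong)
  also have "\<dots> = (\<Sum>y\<in>set_pmf Y. pmf Y y * AW X W)"
    by (rule sum.cong[OF refl]) (simp add: phi_alt algebra_simps)
  also have "\<dots> = AW X W"
    by (simp add: sum_distrib_right[symmetric] sum_pmf_eq_1[OF fy order.refl])
  finally show ?thesis .
qed

lemma AW_le:
  assumes W: "finite W" and p: "pW X W > 0"
  shows "AW X W \<le> pW X W * ln (card W) + phi (pW X W)"
proof -
  have pWs: "pW X W = (\<Sum>x\<in>W. pmf X x)"
  proof -
    have "pW X W = (\<Sum>x\<in>set_pmf X \<inter> W. pmf X x)"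
      unfolding pW_def XW_def by (simp add: sum.inter_restrict[OF fx])
    also have "\<dots> = (\<Sum>x\<in>W. pmf X x)"
      by (rule sum.mono_neutral_left) (auto simp: W set_pmf_iff)
    finally show ?thesis .
  qed
  have AWs: "AW X W = (\<Sum>x\<in>W. phi (pmf X x))"
  proof -
    have "AW X W = (\<Sum>x\<in>set_pmf X. if x \<in> W then phi (pmf X x) else 0)"
      unfolding AW_def XW_def by (rule sum.cong) auto
    also have "\<dots> = (\<Sum>x\<in>set_pmf X \<inter> W. phi (pmf X x))"
      by (simp add: sum.inter_restrict[OF fx])
    also have "\<dots> = (\<Sum>x\<in>W. phi (pmf X x))"
      by (rule sum.mono_neutral_left) (auto simp: W set_pmf_iff)
    finally show ?thesis .
  qed
  have "W \<noteq> {}" using p pWs by auto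
  then have cW: "card W > 0" using W by (simp add: card_gt_0_iff)
  define c where "c = card W / pW X W"
  have c0: "c > 0" unfolding c_def using cW p by simp
  have "AW X W \<le> (\<Sum>x\<in>W. pmf X x * ln c + 1 / c - pmf X x)"
    unfolding AWs by (rule sum_mono) (rule gibbs_term[OF pmf_nonneg c0])
  also have "\<dots> = pW X W * ln c + card W / c - pW X W"
    unfolding pWs by (simp add: sum_subtractf sum.distrib sum_distrib_right)
  also have "card W / c = pW X W" unfolding c_def using cW p by simp
  also have "ln c = ln (card W) + ln (1 / pW X W)" unfolding c_def using cW p by (simp add: ln_div)
  finally show ?thesis unfolding phi_def by (simp add: algebra_simps)
qed


lemma pW_prob:
  assumes W: "finite W"
  shows "pW X W = measure_pmf.prob X W"
proof -
  have "pW X W = (\<Sum>x\<in>set_pmf X \<inter> W. pmf X x)"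
    unfolding pW_def XW_def by (simp add: sum.inter_restrict[OF fx])
  also have "\<dots> = (\<Sum>x\<in>W. pmf X x)"
    by (rule sum.mono_neutral_left) (auto simp: W set_pmf_iff)
  finally show ?thesis by (simp add: measure_measure_pmf_finite[OF W])
qed

lemma pW_compl: "pW X W + pW X (- W) = 1"
proof -
  have "pW X W + pW X (- W) = (\<Sum>x\<in>set_pmf X. pmf X x)"
    unfolding pW_def sum.distrib[symmetric] by (rule sum.cong) (auto simp: XW_def)
  then show ?thesis by (simp add: sum_pmf_eq_1[OF fx order.refl])
qed

lemma AW_compl: "entropy_pmf X = AW X W + AW X (- W)"
  unfolding AW_def entropy_alt[OF fx] sum.distrib[symmetric] by (rule sum.cong) (auto simp: XW_def)

lemma Z_split: "entropy_pmf (diff_pmf X Y) \<ge> PhiD X Y W + PhiD X Y (- W) - phi (pW X W) - phi (pW X (- W))"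
proof -
  define B where "B = set_pmf (diff_pmf X Y)"
  have fB: "finite B" unfolding B_def by (rule fz)
  define g where "g i z = (if i then DW X Y W z else DW X Y (- W) z)" for i z
  have DWn: "DW X Y V z \<ge> 0" for V z unfolding DW_def by (simp add: sum_nonneg XW_nonneg)
  have pd: "pmf (diff_pmf X Y) z = (\<Sum>i\<in>UNIV. g i z)" for z
    unfolding pmf_diff[OF fx] g_def DW_def UNIV_bool
    by (simp add: sum.distrib[symmetric]) (rule sum.cong, auto simp: XW_def)
  have "entropy_pmf (diff_pmf X Y) = (\<Sum>z\<in>B. phi (\<Sum>i\<in>UNIV. g i z))"
    unfolding entropy_alt[OF fz] B_def pd ..
  also have "\<dots> \<ge> (\<Sum>i\<in>UNIV. \<Sum>z\<in>B. phi (g i z))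
     + (\<Sum>i\<in>UNIV. (\<Sum>z\<in>B. g i z) * ln ((\<Sum>z\<in>B. g i z) / (\<Sum>j\<in>UNIV. \<Sum>z\<in>B. g j z)))"
    by (rule mix[OF finite fB]) (simp add: g_def DWn)
  also have "(\<Sum>i\<in>UNIV. \<Sum>z\<in>B. phi (g i z))
     + (\<Sum>i\<in>UNIV. (\<Sum>z\<in>B. g i z) * ln ((\<Sum>z\<in>B. g i z) / (\<Sum>j\<in>UNIV. \<Sum>z\<in>B. g j z)))
     = PhiD X Y W + PhiD X Y (- W) + pW X W * ln (pW X W) + pW X (- W) * ln (pW X (- W))"
  proof -
    have "pW X (- W) + pW X W = 1" using pW_compl[of W] by simp
    then show ?thesis unfolding UNIV_bool g_def by (simp add: sum_DW B_def PhiD_def)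
  qed
  finally show ?thesis by (simp add: phi_alt pW_nonneg)
qed

end

lemma binary: "p \<ge> 0 \<Longrightarrow> q \<ge> 0 \<Longrightarrow> p + q = 1 \<Longrightarrow> phi p + phi q \<le> ln 2"
proof -
  assume "p \<ge> 0" "q \<ge> 0" "p + q = 1"
  moreover have "p * ln 2 + q * ln 2 = (p + q) * ln 2" by (simp add: algebra_simps)
  ultimately show ?thesis using gibbs_term[of p 2] gibbs_term[of q 2] by simp
qed

lemma final_arith:
  fixes p b a z L :: real
  assumes p: "p \<ge> 1/2" and zb: "z \<ge> p * b" and za: "z \<ge> a" and aL: "a \<le> p * L"
  shows "b + 2 * (p * b) + 2 * a \<le> 4 * z + L"
proof (cases "a \<le> p * b")
  case True
  have "(2 * p - 1) * a \<le> (2 * p - 1) * (p * b)" using True p by (intro mult_left_mono) auto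
  then have "p * (2 * a) \<le> p * ((2 * p - 1) * b + L)" using aL by (simp add: algebra_simps)
  then have "2 * a \<le> (2 * p - 1) * b + L" using p by (simp add: mult_le_cancel_left)
  then show ?thesis using zb by (simp add: algebra_simps)
next
  case False
  have "(1 + 2 * p) * (p * b) \<le> (1 + 2 * p) * a" using False p by (intro mult_left_mono) auto
  then have "p * ((1 + 2 * p) * b) \<le> p * (2 * a + L)" using aL by (simp add: algebra_simps)
  then have "(1 + 2 * p) * b \<le> 2 * a + L" using p by (simp add: mult_le_cancel_left)
  then show ?thesis using za by (simp add: algebra_simps)
qed

theorem propositionA8:
  fixes X Y :: "'a::ab_group_add pmf" and S :: "'a set"
  assumes "finite (set_pmf X)" and "finite (set_pmf Y)"
    and "finite S"
    and "measure_pmf.prob X S \<ge> 1 / 2"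
  shows "ln (real (card S)) \<ge> entropy_pmf Y - 4 * ruzsa_dist X Y - 2 * ln 2"
proof -
  note fx = assms(1) and fy = assms(2)
  define p where "p = pW X S"
  define q where "q = pW X (- S)"
  define b where "b = entropy_pmf Y"
  define L where "L = ln (real (card S))"
  have p: "p \<ge> 1/2" unfolding p_def using pW_prob[OF fx fy assms(3)] assms(4) by simp
  have pq: "p + q = 1" unfolding p_def q_def by (rule pW_compl[OF fx fy])
  have F1: "PhiD X Y S \<ge> p * b + phi p" unfolding p_def b_def by (rule PhiD_ge1[OF fx fy])
  have F2: "PhiD X Y S \<ge> AW X S" by (rule PhiD_ge2[OF fx fy])
  have F3: "PhiD X Y (- S) \<ge> q * b + phi q" unfolding q_def b_def by (rule PhiD_ge1[OF fx fy])
  have F4: "PhiD X Y (- S) \<ge> AW X (- S)" by (rule PhiD_ge2[OF fx fy])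
  have F5: "AW X S \<le> p * L + phi p" unfolding p_def L_def
    by (rule AW_le[OF fx fy assms(3)]) (use p p_def in simp)
  have F6: "entropy_pmf (diff_pmf X Y) \<ge> PhiD X Y S + PhiD X Y (- S) - phi p - phi q"
    unfolding p_def q_def by (rule Z_split[OF fx fy])
  have F7: "phi p + phi q \<le> ln 2"
    by (rule binary) (use pq p_def q_def pW_nonneg in auto)
  have HX: "entropy_pmf X = AW X S + AW X (- S)" by (rule AW_compl[OF fx fy])
  have qb: "q * b = b - p * b" using pq by (metis add_diff_cancel_left' left_diff_distrib' mult_1)
  have A: "b + 2 * (p * b) + 2 * (AW X S - phi p) \<le> 4 * (PhiD X Y S - phi p) + L"
    by (rule final_arith[OF p]) (use F1 F2 F5 in auto)
  have K: "4 * entropy_pmf (diff_pmf X Y) \<ge> 3 * b + 2 * entropy_pmf X - L - 2 * ln 2"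
  proof -
    have s1: "4 * PhiD X Y (- S) \<ge> 2 * (q * b) + 2 * phi q + 2 * AW X (- S)" using F3 F4 by argo
    have s2: "4 * PhiD X Y S \<ge> b + 2 * (p * b) + 2 * AW X S + 2 * phi p - L" using A by argo
    have s3: "4 * entropy_pmf (diff_pmf X Y) \<ge> 4 * PhiD X Y S + 4 * PhiD X Y (- S) - 4 * phi p - 4 * phi q" using F6 by argo
    show ?thesis using s1 s2 s3 F7 HX qb by argo
  qed
  then show ?thesis unfolding ruzsa_dist_def L_def[symmetric] b_def[symmetric] by argo
qed

end
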